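(* Define, for integers $n,m,p\ge0$, $\mathcal{Z}_{n,m}(p)=\binom{m+p}{p}\sum_{k=0}^{m}s(m,k)\mathcal{B}_{n+k,p}$ and the polynomials $$\mathcal{Z}_{n,m}(x;p)=\sum_{k=0}^{n}\binom{n}{k}\mathcal{Z}_{k,m}(p)\,x^{n-k}.$$ Then for all integers $n,m,p\ge0$, $$\mathcal{Z}_{n+1,m}(x;p)=\frac{m+1}{m+p+1}\,\mathcal{Z}_{n,m+1}(x;p)+(m+x)\,\mathcal{Z}_{n,m}(x;p),$$ with $\mathcal{Z}_{0,m}(x;p)=1$.
   Context: $s(m,k)$ are the signed Stirling numbers of the first kind, defined by $x(x-1)\cdots(x-m+1)=\sum_{k=0}^m s(m,k)x^k$. For an integer $p\ge0$, the $p$-Bell numbers $\mathcal{B}_{n,p}$ are defined by $\sum_{n\ge0}\mathcal{B}_{n,p}\frac{z^n}{n!}=\sum_{n\ge0}\binom{n+p}{p}^{-1}\frac{(e^z-1)^n}{n!}$. *)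

theory Defs
  imports "HOL-Computational_Algebra.Formal_Power_Series" "HOL-Computational_Algebra.Polynomial"
begin

definition stirling1s :: "nat \<Rightarrow> nat \<Rightarrow> int" where
  "stirling1s m k = coeff (\<Prod>i<m. [:- of_nat i, 1:]) k"

text \<open>p-Bell numbers: n! times the n-th coefficient of
  sum_j binom(j+p,p)^(-1) (e^z-1)^j / j!.  Since (e^z - 1)^j has order j,
  only the terms j \<le> n contribute to the n-th coefficient, so the formal
  infinite sum is truncated exactly.\<close>
definition pBell :: "nat \<Rightarrow> nat \<Rightarrow> real" where
  "pBell n p = fact n *
     (\<Sum>j\<le>n. (1 / of_nat ((j + p) choose p)) * (1 / fact j) *
        fps_nth ((fps_exp (1::real) - 1) ^ j) n)"

definition Zc :: "nat \<Rightarrow> nat \<Rightarrow> nat \<Rightarrow> real" where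
  "Zc n m p = of_nat ((m + p) choose p) *
     (\<Sum>k\<le>m. of_int (stirling1s m k) * pBell (n + k) p)"

definition Zpoly :: "nat \<Rightarrow> nat \<Rightarrow> real \<Rightarrow> nat \<Rightarrow> real" where
  "Zpoly n m x p = (\<Sum>k\<le>n. of_nat (n choose k) * Zc k m p * x ^ (n - k))"

end

theory Submission
  imports Defs
begin

fun cc :: "nat \<Rightarrow> nat \<Rightarrow> real" where
  "cc 0 j = (if j = 0 then 1 else 0)"
| "cc (Suc n) 0 = 0"
| "cc (Suc n) (Suc j) = real (Suc j) * cc n (Suc j) + cc n j"

lemma cc_big: "n < j \<Longrightarrow> cc n j = 0"
proof (induction n arbitrary: j)
  case 0 then show ?case by simp
next
  case (Suc n)
  then obtain j' where "j = Suc j'" by (cases j) auto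
  with Suc show ?case by simp
qed

abbreviation EE :: "real fps" where "EE \<equiv> fps_exp 1 - 1"

lemma deriv_EE_pow: "fps_nth (fps_deriv (EE ^ Suc j)) n = real (Suc j) * (fps_nth (EE ^ Suc j) n + fps_nth (EE ^ j) n)"
proof -
  have e: "fps_deriv EE = EE + 1" by simp
  have "fps_deriv (EE ^ Suc j) = fps_const (real (Suc j)) * fps_deriv EE * EE ^ (Suc j - 1)"
    by (rule fps_deriv_power)
  also have "\<dots> = fps_const (real (Suc j)) * (EE ^ Suc j + EE ^ j)"
    unfolding e by (simp add: algebra_simps)
  finally show ?thesis by (simp only: fps_mult_left_const_nth fps_add_nth)
qed

lemma arith_aux: "fact n / fact (Suc i) * (real (Suc i) * (a + b)) =
  real (Suc i) * (fact n * (1 / fact (Suc i)) * a) + fact n * (1 / fact i) * (b::real)"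
proof -
  have g: "(F::real) > 0 \<Longrightarrow> (k::real) > 0 \<Longrightarrow> N/(k*F) * (k*(a+b)) = k*(N*(1/(k*F))*a) + N*(1/F)*b"
    for F k N by (simp add: field_simps)
  have f: "(fact (Suc i)::real) = real (Suc i) * fact i" by (simp only: fact_Suc of_nat_mult)
  show ?thesis unfolding f by (rule g) auto
qed

lemma cc_fps: "fact n * (1 / fact j) * fps_nth (EE ^ j) n = cc n j"
proof (induction n arbitrary: j)
  case 0
  then show ?case by (cases j) auto
next
  case (Suc n)
  show ?case
  proof (cases j)
    case 0 then show ?thesis by simp
  next
    case (Suc i)
    have "fps_nth (fps_deriv (EE ^ Suc i)) n = of_nat (Suc i) * (fps_nth (EE ^ Suc i) n + fps_nth (EE ^ i) n)"
      by (rule deriv_EE_pow)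
    then have h: "of_nat (Suc n) * fps_nth (EE ^ Suc i) (Suc n) = of_nat (Suc i) * (fps_nth (EE ^ Suc i) n + fps_nth (EE ^ i) n)"
      unfolding fps_deriv_nth by (simp only: Suc_eq_plus1)
    have "fact (Suc n) * (1 / fact (Suc i)) * fps_nth (EE ^ Suc i) (Suc n)
        = fact n / fact (Suc i) * (of_nat (Suc n) * fps_nth (EE ^ Suc i) (Suc n))"
      by (simp add: fact_Suc[of n] field_simps)
    also have "\<dots> = fact n / fact (Suc i) * (of_nat (Suc i) * (fps_nth (EE ^ Suc i) n + fps_nth (EE ^ i) n))"
      using h by simp
    also have "\<dots> = real (Suc i) * (fact n * (1 / fact (Suc i)) * fps_nth (EE ^ Suc i) n)
          + fact n * (1 / fact i) * fps_nth (EE ^ i) n"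
      by (rule arith_aux)
    also have "\<dots> = real (Suc i) * cc n (Suc i) + cc n i"
      using Suc.IH[of "Suc i"] Suc.IH[of i] by simp
    finally show ?thesis using Suc by simp
  qed
qed

definition ss :: "nat \<Rightarrow> nat \<Rightarrow> real" where "ss m k = of_int (stirling1s m k)"

lemma ss_0: "ss 0 k = (if k = 0 then 1 else 0)"
  by (simp add: ss_def stirling1s_def)

lemma ss_Suc_poly: "(\<Prod>i<Suc m. [:- of_nat i, 1:]) = pCons 0 (\<Prod>i<m. [:- of_nat i, 1:]) + smult (- of_nat m) (\<Prod>i<m. [:- of_nat i, 1::int:])"
  by (simp add: algebra_simps)

lemma ss_Suc0: "ss (Suc m) 0 = - real m * ss m 0"
  unfolding ss_def stirling1s_def by (subst ss_Suc_poly) simp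

lemma ss_SucSuc: "ss (Suc m) (Suc k) = ss m k - real m * ss m (Suc k)"
  unfolding ss_def stirling1s_def by (subst ss_Suc_poly) simp

lemma ss_big: "m < k \<Longrightarrow> ss m k = 0"
proof (induction m arbitrary: k)
  case 0 then show ?case by (simp add: ss_0)
next
  case (Suc m)
  then obtain k' where "k = Suc k'" by (cases k) auto
  with Suc show ?case by (simp add: ss_SucSuc)
qed

lemma ss_sum_Suc:
  "(\<Sum>k\<le>Suc m. ss (Suc m) k * f k) = (\<Sum>k\<le>m. ss m k * f (Suc k)) - real m * (\<Sum>k\<le>m. ss m k * f k)"
proof -
  have "(\<Sum>k\<le>Suc m. ss (Suc m) k * f k) = ss (Suc m) 0 * f 0 + (\<Sum>k\<le>m. ss (Suc m) (Suc k) * f (Suc k))"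
    by (rule sum.atMost_Suc_shift)
  also have "\<dots> = (\<Sum>k\<le>m. ss m k * f (Suc k)) - real m * (ss m 0 * f 0 + (\<Sum>k\<le>m. ss m (Suc k) * f (Suc k)))"
    by (simp add: ss_Suc0 ss_SucSuc algebra_simps sum_subtractf sum_distrib_left)
  also have "ss m 0 * f 0 + (\<Sum>k\<le>m. ss m (Suc k) * f (Suc k)) = (\<Sum>k\<le>Suc m. ss m k * f k)"
    by (rule sum.atMost_Suc_shift[symmetric])
  also have "\<dots> = (\<Sum>k\<le>m. ss m k * f k)"
    by (simp add: ss_big)
  finally show ?thesis .
qed

lemma T_delta: "(\<Sum>k\<le>m. ss m k * cc k j) = (if j = m then 1 else 0)"
proof (induction m arbitrary: j)
  case 0 then show ?case by (simp add: ss_0)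
next
  case (Suc m)
  show ?case
  proof (cases j)
    case 0
    then show ?thesis using Suc.IH[of 0] unfolding ss_sum_Suc by simp
  next
    case (Suc j')
    have "(\<Sum>k\<le>m. ss m k * cc (Suc k) (Suc j')) =
        real (Suc j') * (\<Sum>k\<le>m. ss m k * cc k (Suc j')) + (\<Sum>k\<le>m. ss m k * cc k j')"
      by (simp add: algebra_simps sum.distrib sum_distrib_left)
    then show ?thesis using Suc Suc.IH[of j'] Suc.IH[of "Suc j'"]
      unfolding ss_sum_Suc by simp
  qed
qed

lemma pBell_cc: "n \<le> N \<Longrightarrow> pBell n p = (\<Sum>j\<le>N. (1 / of_nat ((j + p) choose p)) * cc n j)"
proof -
  assume "n \<le> N"
  have "pBell n p = (\<Sum>j\<le>n. (1 / of_nat ((j + p) choose p)) * cc n j)"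
    unfolding pBell_def sum_distrib_left
    by (rule sum.cong[OF refl]) (subst cc_fps[symmetric], simp)
  also have "\<dots> = (\<Sum>j\<le>N. (1 / of_nat ((j + p) choose p)) * cc n j)"
    using \<open>n \<le> N\<close> by (intro sum.mono_neutral_left) (auto simp: cc_big)
  finally show ?thesis .
qed

lemma Zc0: "Zc 0 m p = 1"
proof -
  have "(\<Sum>k\<le>m. ss m k * pBell k p) = (\<Sum>k\<le>m. ss m k * (\<Sum>j\<le>m. (1 / of_nat ((j + p) choose p)) * cc k j))"
    by (intro sum.cong refl) (simp add: pBell_cc)
  also have "\<dots> = (\<Sum>j\<le>m. (1 / of_nat ((j + p) choose p)) * (\<Sum>k\<le>m. ss m k * cc k j))"
    (is "?L = ?R")
  proof -
    have "?L = (\<Sum>k\<le>m. \<Sum>j\<le>m. (1 / of_nat ((j + p) choose p)) * (ss m k * cc k j))"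
      unfolding sum_distrib_left by (intro sum.cong refl) simp
    also have "\<dots> = (\<Sum>j\<le>m. \<Sum>k\<le>m. (1 / of_nat ((j + p) choose p)) * (ss m k * cc k j))"
      by (rule sum.swap)
    also have "\<dots> = ?R"
      by (simp only: sum_distrib_left)
    finally show ?thesis .
  qed
  also have "\<dots> = (\<Sum>j\<le>m. if j = m then 1 / of_nat ((j + p) choose p) else 0)"
    by (intro sum.cong refl) (simp add: T_delta)
  also have "\<dots> = 1 / of_nat ((m + p) choose p)"
    by simp
  finally have "(\<Sum>k\<le>m. ss m k * pBell k p) = 1 / of_nat ((m + p) choose p)" .
  moreover have "((m + p) choose p) > 0" by simp
  ultimately show ?thesis unfolding Zc_def ss_def[symmetric] by simp
qed

lemma Zc_rec: "Zc (Suc n) m p = real (m + 1) / real (m + p + 1) * Zc n (m + 1) p + real m * Zc n m p"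
proof -
  define W where "W n m = (\<Sum>k\<le>m. ss m k * pBell (n + k) p)" for n m
  have Zc: "Zc n m p = of_nat ((m + p) choose p) * W n m" for n m
    unfolding Zc_def W_def ss_def by simp
  have Wr: "W n (Suc m) = W (Suc n) m - real m * W n m"
    unfolding W_def by (subst ss_sum_Suc) simp
  have ch: "real (m + 1) / real (m + p + 1) * real (Suc (m + p) choose p) = real (m + p choose p)"
  proof -
    have a: "Suc (m+p) * (m+p choose m) = (Suc (m+p) choose Suc m) * Suc m"
      by (rule Suc_times_binomial_eq)
    have b: "(Suc (m + p) choose Suc m) = (Suc (m + p) choose p)"
      using binomial_symmetric[of "Suc m" "Suc (m+p)"] by simp
    have c: "m + p choose m = m + p choose p"
      using binomial_symmetric[of m "m+p"] by simp
    have d: "(Suc (m + p) choose p) * (m + 1) = (m + p + 1) * (m + p choose p)"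
      using a unfolding b c by simp
    have "real ((Suc (m + p) choose p) * (m + 1)) = real ((m + p + 1) * (m + p choose p))"
      by (simp only: d)
    then have "real (Suc (m + p) choose p) * real (m + 1) = real (m + p + 1) * real (m + p choose p)"
      by (simp only: of_nat_mult)
    then show ?thesis by (simp add: field_simps)
  qed
  have E: "real (m + 1) / real (m + p + 1) * Zc n (m + 1) p
      = real (m + p choose p) * W n (Suc m)"
    unfolding Zc using ch by (simp add: mult.assoc[symmetric])
  have "Zc (Suc n) m p = real (m+p choose p) * W n (Suc m) + real m * Zc n m p"
  proof -
    have Wr': "W (Suc n) m = W n (Suc m) + real m * W n m" using Wr by simp
    show ?thesis unfolding Zc Wr' by (simp add: algebra_simps)
  qed
  then show ?thesis using E by simp
qed

theorem mainTheorem14: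
  fixes n m p :: nat and x :: real
  shows "Zpoly (n + 1) m x p =
           real (m + 1) / real (m + p + 1) * Zpoly n (m + 1) x p + (real m + x) * Zpoly n m x p
         \<and> Zpoly 0 m x p = 1"
proof
  show "Zpoly 0 m x p = 1" by (simp add: Zpoly_def Zc0)
next
  have A: "Zpoly (Suc n) m x p = Zc 0 m p * x ^ Suc n + (\<Sum>k\<le>n. of_nat (Suc n choose Suc k) * Zc (Suc k) m p * x ^ (n - k))"
    unfolding Zpoly_def by (subst sum.atMost_Suc_shift) simp
  have B: "(\<Sum>k\<le>n. of_nat (Suc n choose Suc k) * Zc (Suc k) m p * x ^ (n - k))
     = (\<Sum>k\<le>n. of_nat (n choose Suc k) * Zc (Suc k) m p * x ^ (n - k))
       + (\<Sum>k\<le>n. of_nat (n choose k) * Zc (Suc k) m p * x ^ (n - k))"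
    by (simp add: sum.distrib algebra_simps)
  have C: "Zc 0 m p * x ^ Suc n + (\<Sum>k\<le>n. of_nat (n choose Suc k) * Zc (Suc k) m p * x ^ (n - k))
     = x * Zpoly n m x p"
  proof -
    have "x * Zpoly n m x p = (\<Sum>k\<le>n. of_nat (n choose k) * Zc k m p * x ^ (Suc n - k))"
      unfolding Zpoly_def sum_distrib_left
      by (intro sum.cong refl) (simp add: Suc_diff_le algebra_simps)
    also have "\<dots> = (\<Sum>k\<le>Suc n. of_nat (n choose k) * Zc k m p * x ^ (Suc n - k))"
      by (intro sum.mono_neutral_left) auto
    also have "\<dots> = Zc 0 m p * x ^ Suc n + (\<Sum>k\<le>n. of_nat (n choose Suc k) * Zc (Suc k) m p * x ^ (Suc n - Suc k))"
      by (subst sum.atMost_Suc_shift) simp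
    finally show ?thesis by simp
  qed
  have D: "(\<Sum>k\<le>n. of_nat (n choose k) * Zc (Suc k) m p * x ^ (n - k))
     = real (m + 1) / real (m + p + 1) * Zpoly n (m + 1) x p + real m * Zpoly n m x p"
    unfolding Zpoly_def Zc_rec by (simp add: sum_distrib_left sum.distrib algebra_simps)
  have "Zpoly (Suc n) m x p = x * Zpoly n m x p + (real (m + 1) / real (m + p + 1) * Zpoly n (m + 1) x p + real m * Zpoly n m x p)"
    using A B C D by simp
  then show "Zpoly (n + 1) m x p =
           real (m + 1) / real (m + p + 1) * Zpoly n (m + 1) x p + (real m + x) * Zpoly n m x p"
    by (simp add: algebra_simps)
qed

end
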